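(* Let $a_n$, $s$ and $c$ be any integers and let $n$ be a positive integer. Then \[ \sum_{a_{n-1}=c}^{a_n}\sum_{a_{n-2}=c}^{a_{n-1}}\cdots\sum_{a_0=c}^{a_1}F_{3a_0+s}=\frac{F_{2n+3a_n+s}}{2^n}-\sum_{j=0}^{n-1}\frac{F_{2(n-j)+3(c-1)+s}}{2^{n-j}}\binom{a_n+j-c}{j}, \] and \[ \sum_{a_{n-1}=c}^{a_n}\sum_{a_{n-2}=c}^{a_{n-1}}\cdots\sum_{a_0=c}^{a_1}L_{3a_0+s}=\frac{L_{2n+3a_n+s}}{2^n}-\sum_{j=0}^{n-1}\frac{L_{2(n-j)+3(c-1)+s}}{2^{n-j}}\binom{a_n+j-c}{j}. \]
   Context: $F_j$ and $L_j$ are the Fibonacci and Lucas numbers: $F_0=0,F_1=1$, $L_0=2,L_1=1$, both satisfying $X_j=X_{j-1}+X_{j-2}$, extended to all integer indices via the recurrence. For integers $c,m$ and a function $f$ on the integers, $\sum_{k=c}^m f(k)$ denotes the usual sum if $m\ge c$, equals $0$ if $m=c-1$, and equals $-\sum_{k=m+1}^{c-1}f(k)$ if $m\le c-2$. The nested sum $\sum_{a_{n-1}=c}^{a_n}\cdots\sum_{a_0=c}^{a_1}g(a_0)$ is the iterated sum with $n$ summation signs: innermost over $a_0$ from $c$ to $a_1$, then $a_1$ from $c$ to $a_2$, ..., outermost $a_{n-1}$ from $c$ to $a_n$. For an integer $j\ge0$ and any number $y$, $\binom{y}{j}=y(y-1)\cdots(y-j+1)/j!$. *)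

theory Defs
  imports Complex_Main
begin

text \<open>Sequences satisfying X_j = X_(j-1) + X_(j-2), started at X_0 = x0, X_1 = x1,
  extended to all integers via the recurrence (forwards and backwards).\<close>

fun rec_fwd :: "int \<Rightarrow> int \<Rightarrow> nat \<Rightarrow> int \<times> int" where
  "rec_fwd x0 x1 0 = (x0, x1)"
| "rec_fwd x0 x1 (Suc n) = (let (a, b) = rec_fwd x0 x1 n in (b, a + b))"

fun rec_bwd :: "int \<Rightarrow> int \<Rightarrow> nat \<Rightarrow> int \<times> int" where
  "rec_bwd x0 x1 0 = (x0, x1)"
| "rec_bwd x0 x1 (Suc n) = (let (a, b) = rec_bwd x0 x1 n in (b - a, a))"

definition rec_seq :: "int \<Rightarrow> int \<Rightarrow> int \<Rightarrow> int" where
  "rec_seq x0 x1 k = (if k \<ge> 0 then fst (rec_fwd x0 x1 (nat k)) else fst (rec_bwd x0 x1 (nat (- k))))"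

definition fibZ :: "int \<Rightarrow> int" where "fibZ = rec_seq 0 1"
definition lucZ :: "int \<Rightarrow> int" where "lucZ = rec_seq 2 1"

definition gsum :: "int \<Rightarrow> int \<Rightarrow> (int \<Rightarrow> real) \<Rightarrow> real" where
  "gsum c m f = (if m \<ge> c then (\<Sum>k\<in>{c..m}. f k)
                 else if m = c - 1 then 0
                 else - (\<Sum>k\<in>{m+1..c-1}. f k))"

fun nested_sum :: "int \<Rightarrow> nat \<Rightarrow> (int \<Rightarrow> real) \<Rightarrow> int \<Rightarrow> real" where
  "nested_sum c 0 g a = g a"
| "nested_sum c (Suc n) g a = gsum c a (nested_sum c n g)"

end

theory Submission
  imports Defs
begin

lemma fwd_Suc: "rec_fwd x0 x1 (Suc n) = (snd (rec_fwd x0 x1 n), fst (rec_fwd x0 x1 n) + snd (rec_fwd x0 x1 n))"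
  by (simp add: split_beta)
lemma bwd_Suc: "rec_bwd x0 x1 (Suc n) = (snd (rec_bwd x0 x1 n) - fst (rec_bwd x0 x1 n), fst (rec_bwd x0 x1 n))"
  by (simp add: split_beta)

lemma fwd_rec: "fst (rec_fwd x0 x1 (Suc (Suc n))) = fst (rec_fwd x0 x1 (Suc n)) + fst (rec_fwd x0 x1 n)"
  by (simp only: fwd_Suc) simp
lemma bwd_rec: "fst (rec_bwd x0 x1 n) = fst (rec_bwd x0 x1 (Suc n)) + fst (rec_bwd x0 x1 (Suc (Suc n)))"
  by (simp only: bwd_Suc) simp

lemma rec_seq_rec: "rec_seq x0 x1 (k + 2) = rec_seq x0 x1 (k + 1) + rec_seq x0 x1 k"
proof -
  consider "k \<ge> 0" | "k = -1" | "k \<le> -2" by linarith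
  then show ?thesis
  proof cases
    case 1
    then have "nat (k+2) = Suc (Suc (nat k))" "nat (k+1) = Suc (nat k)" by auto
    then show ?thesis using 1 fwd_rec[of x0 x1 "nat k"] unfolding rec_seq_def by (simp del: rec_fwd.simps)
  next
    case 2
    then show ?thesis unfolding rec_seq_def by (simp add: fwd_Suc bwd_Suc)
  next
    case 3
    define m where "m = nat (-k-2)"
    have e: "nat (-k) = Suc (Suc m)" "nat (-(k+1)) = Suc m" "nat (-(k+2)) = m" using 3 by (auto simp: m_def)
    show ?thesis
    proof (cases "k = -2")
      case True
      then have "nat (- k) = Suc (Suc 0)" by simp
      then show ?thesis using True unfolding rec_seq_def by (simp add: bwd_Suc fwd_Suc numeral_2_eq_2)
    next
      case False
      with 3 have "k+2 < 0" "k+1<0" by auto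
      then show ?thesis using 3 e bwd_rec[of x0 x1 m] unfolding rec_seq_def by simp
    qed
  qed
qed

lemma tele_pos:
  fixes m c :: int and f G :: "int \<Rightarrow> real"
  assumes "\<And>k. f k = G k - G (k - 1)" "m \<ge> c - 1"
  shows "(\<Sum>k\<in>{c..m}. f k) = G m - G (c - 1)"
  using assms(2)
proof (induction m rule: int_ge_induct)
  case base
  then show ?case by simp
next
  case (step i)
  have "{c..i+1} = insert (i+1) {c..i}" using step(1) by auto
  then show ?case using step assms(1)[of "i+1"] by simp
qed

lemma tele:
  assumes "\<And>k. f k = G k - G (k - 1)"
  shows "gsum c m f = G m - G (c - 1)"
proof -
  consider "m \<ge> c" | "m = c - 1" | "m < c - 1" by linarith
  then show ?thesis
  proof cases
    case 1 then show ?thesis unfolding gsum_def using tele_pos[of f G, OF assms, of c m] by simp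
  next
    case 2 then show ?thesis unfolding gsum_def by simp
  next
    case 3 then show ?thesis unfolding gsum_def using tele_pos[of f G, OF assms, of "m+1" "c-1"] by simp
  qed
qed

definition R :: "(int \<Rightarrow> real) \<Rightarrow> int \<Rightarrow> int \<Rightarrow> nat \<Rightarrow> int \<Rightarrow> real" where
  "R X s c n b = X (2 * int n + 3 * b + s) / 2 ^ n
     - (\<Sum>j<n. X (2 * int (n - j) + 3 * (c - 1) + s) / 2 ^ (n - j)
                 * (real_of_int (b + int j - c) gchoose j))"

lemma binom_step: "(real_of_int (b + int (Suc i) - c) gchoose Suc i) - (real_of_int (b - 1 + int (Suc i) - c) gchoose Suc i)
   = real_of_int (b + int i - c) gchoose i"
proof -
  have g: "((x + 1) gchoose Suc i) - (x gchoose Suc i) = x gchoose i" for x :: real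
    using gbinomial_Suc_Suc[of x i] by simp
  have "real_of_int (b + int (Suc i) - c) = real_of_int (b + int i - c) + 1" by simp
  moreover have "real_of_int (b - 1 + int (Suc i) - c) = real_of_int (b + int i - c)" by simp
  ultimately show ?thesis by (simp only: g)
qed

lemma R_diff:
  assumes rec: "\<And>k. X (k + 2) = X (k + 1) + X k"
  shows "R X s c (Suc n) b - R X s c (Suc n) (b - 1) = R X s c n b"
proof -
  define t where "t i = X (2 * int (n - i) + 3 * (c - 1) + s) / 2 ^ (n - i)" for i
  have S: "(\<Sum>j<Suc n. X (2 * int (Suc n - j) + 3 * (c - 1) + s) / 2 ^ (Suc n - j)
                 * (real_of_int (bb + int j - c) gchoose j))
        = X (2 * int (Suc n) + 3 * (c - 1) + s) / 2 ^ Suc n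
          + (\<Sum>i<n. t i * (real_of_int (bb + int (Suc i) - c) gchoose Suc i))" for bb
    by (subst sum.lessThan_Suc_shift) (simp add: t_def)
  have x: "X (2 * int (Suc n) + 3 * b + s) - X (2 * int (Suc n) + 3 * (b - 1) + s) = 2 * X (2 * int n + 3 * b + s)"
  proof -
    have gen: "X (m + 2) - X (m - 1) = 2 * X m" for m
    proof -
      have "X (m - 1 + 2) = X (m - 1 + 1) + X (m - 1)" by (rule rec)
      moreover have "m - 1 + 2 = m + 1" "m - 1 + 1 = m" by auto
      ultimately show ?thesis using rec[of m] by simp
    qed
    let ?m = "2 * int n + 3 * b + s"
    have "2 * int (Suc n) + 3 * b + s = ?m + 2" "2 * int (Suc n) + 3 * (b - 1) + s = ?m - 1"
      by auto
    then show ?thesis by (simp only: gen)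
  qed
  have "(\<Sum>i<n. t i * (real_of_int (b + int (Suc i) - c) gchoose Suc i))
      - (\<Sum>i<n. t i * (real_of_int (b - 1 + int (Suc i) - c) gchoose Suc i))
      = (\<Sum>i<n. t i * (real_of_int (b + int i - c) gchoose i))"
    by (simp only: sum_subtractf[symmetric] right_diff_distrib[symmetric] binom_step)
  moreover have "X (2 * int (Suc n) + 3 * b + s) / 2 ^ Suc n - X (2 * int (Suc n) + 3 * (b - 1) + s) / 2 ^ Suc n
     = X (2 * int n + 3 * b + s) / 2 ^ n"
    using x by (simp add: diff_divide_distrib[symmetric])
  ultimately show ?thesis
    unfolding R_def S t_def by (simp add: algebra_simps)
qed

lemma R_zero: "R X s c (Suc n) (c - 1) = 0"
proof -
  have "real_of_int (c - 1 + int (Suc i) - c) gchoose Suc i = 0" for i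
  proof -
    have "real_of_int (c - 1 + int (Suc i) - c) = real i" by simp
    then show ?thesis by (simp add: binomial_gbinomial[symmetric] del: binomial_gbinomial)
  qed
  then show ?thesis unfolding R_def by (subst sum.lessThan_Suc_shift) (simp only:, simp)
qed

lemma main:
  assumes rec: "\<And>k. X (k + 2) = X (k + 1) + X k"
  shows "nested_sum c n (\<lambda>a0. X (3 * a0 + s)) a = R X s c n a"
proof (induction n arbitrary: a)
  case 0
  then show ?case by (simp add: R_def)
next
  case (Suc n)
  have "nested_sum c (Suc n) (\<lambda>a0. X (3 * a0 + s)) a = gsum c a (R X s c n)"
  proof -
    have "nested_sum c n (\<lambda>a0. X (3 * a0 + s)) = R X s c n" by (intro ext) (rule Suc.IH)
    then show ?thesis by simp
  qed
  also have "\<dots> = R X s c (Suc n) a - R X s c (Suc n) (c - 1)"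
    by (rule tele) (simp add: R_diff[OF rec])
  finally show ?case by (simp add: R_zero)
qed

theorem theorem1:
  fixes an s c :: int and n :: nat
  assumes "n > 0"
  shows "(nested_sum c n (\<lambda>a0. real_of_int (fibZ (3 * a0 + s))) an
           = real_of_int (fibZ (2 * int n + 3 * an + s)) / 2 ^ n
             - (\<Sum>j<n. real_of_int (fibZ (2 * int (n - j) + 3 * (c - 1) + s)) / 2 ^ (n - j)
                         * (real_of_int (an + int j - c) gchoose j))) \<and>
         (nested_sum c n (\<lambda>a0. real_of_int (lucZ (3 * a0 + s))) an
           = real_of_int (lucZ (2 * int n + 3 * an + s)) / 2 ^ n
             - (\<Sum>j<n. real_of_int (lucZ (2 * int (n - j) + 3 * (c - 1) + s)) / 2 ^ (n - j)
                         * (real_of_int (an + int j - c) gchoose j)))"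
proof -
  have f: "\<And>k. real_of_int (fibZ (k + 2)) = real_of_int (fibZ (k + 1)) + real_of_int (fibZ k)"
    unfolding fibZ_def by (simp add: rec_seq_rec)
  have l: "\<And>k. real_of_int (lucZ (k + 2)) = real_of_int (lucZ (k + 1)) + real_of_int (lucZ k)"
    unfolding lucZ_def by (simp add: rec_seq_rec)
  show ?thesis
    using main[of "\<lambda>k. real_of_int (fibZ k)", OF f] main[of "\<lambda>k. real_of_int (lucZ k)", OF l]
    by (simp add: R_def)
qed

end
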